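(* Let $\beta>0$ and let $p,d$ be nonnegative integers. Then $\Phi_\beta(p,d)=\Phi_\beta(p,0)^{d+1}$, and $\Phi_\beta(p,0)$ is the smallest positive root of the equation $$y^{p+1}-(\beta+1)y+\beta=0.$$ In particular, if $\beta\ge p$, then $\Phi_\beta(p,d)=1$ for all integers $d\ge 0$, i.e. $W_\beta$ crosses the line $y=px+d$ almost surely.
   Context: For $\beta>0$, the $\beta$-biased monotonic random walk $W_\beta$ is the random walk on $\mathbb{Z}^2$ starting at the origin $(0,0)$ which, independently at each step, moves from $(a,b)$ to $(a+1,b)$ with probability $1/(\beta+1)$ and to $(a,b+1)$ with probability $\beta/(\beta+1)$. For nonnegative integers $p,d$, $\Phi_\beta(p,d)$ denotes the probability that $W_\beta$ crosses the line $y=px+d$, i.e. the probability that $W_\beta$ visits at least one of the lattice points $(n,pn+d+1)$, $n\ge 0$. *)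

theory Defs
  imports "HOL-Probability.Probability"
begin

text \<open>The walk is driven by an i.i.d. stream of Boolean steps: True = step (a,b) -> (a,b+1)
  (probability beta/(beta+1)), False = step (a,b) -> (a+1,b) (probability 1/(beta+1)).\<close>

definition step_space :: "real \<Rightarrow> bool stream measure" where
  "step_space \<beta> = stream_space (measure_pmf (bernoulli_pmf (\<beta> / (\<beta> + 1))))"

definition walk_pos :: "bool stream \<Rightarrow> nat \<Rightarrow> nat \<times> nat" where
  "walk_pos \<omega> k = (length (filter Not (stake k \<omega>)), length (filter id (stake k \<omega>)))"

definition crosses :: "nat \<Rightarrow> nat \<Rightarrow> bool stream \<Rightarrow> bool" where
  "crosses p d \<omega> \<longleftrightarrow> (\<exists>k n. walk_pos \<omega> k = (n, p * n + d + 1))"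

definition Phi :: "real \<Rightarrow> nat \<Rightarrow> nat \<Rightarrow> real" where
  "Phi \<beta> p d = measure (step_space \<beta>) {\<omega> \<in> space (step_space \<beta>). crosses p d \<omega>}"

end

theory Submission
  imports Defs
begin


fun hit :: "nat \<Rightarrow> nat \<Rightarrow> nat \<Rightarrow> bool stream \<Rightarrow> bool" where
  "hit p 0 m \<omega> = (m = 0)"
| "hit p (Suc N) m \<omega> = (m = 0 \<or> (shd \<omega> \<and> hit p N (m-1) (stl \<omega>)) \<or> (\<not> shd \<omega> \<and> hit p N (m+p) (stl \<omega>)))"

fun g :: "real \<Rightarrow> nat \<Rightarrow> nat \<Rightarrow> nat \<Rightarrow> real" where
  "g a p 0 m = (if m=0 then 1 else 0)"
| "g a p (Suc N) m = (if m = 0 then 1 else a * g a p N (m-1) + (1-a) * g a p N (m+p))"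

lemma g_nonneg: "0 \<le> a \<Longrightarrow> a \<le> 1 \<Longrightarrow> 0 \<le> g a p N m"
  by (induction N arbitrary: m) auto

lemma sets_step_space[measurable_cong]: "sets (step_space b) = sets (stream_space (count_space UNIV))"
  unfolding step_space_def by (rule sets_stream_space_cong) simp

lemma hit_meas[measurable]: "Measurable.pred (step_space b) (hit p N m)"
proof (induction N arbitrary: m)
  case 0
  then show ?case by simp
next
  case (Suc N)
  note [measurable] = Suc
  show ?case by simp measurable
qed

lemma ps: "prob_space (step_space b)"
  unfolding step_space_def by (rule prob_space.prob_space_stream_space) (rule prob_space_measure_pmf)

lemma hit_prob:
  assumes "b > 0"
  shows "measure (step_space b) {\<omega>\<in>space (step_space b). hit p N m \<omega>} = g (b/(b+1)) p N m"
proof (induction N arbitrary: m)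
  case 0
  interpret prob_space "step_space b" by (rule ps)
  show ?case by (simp add: prob_space)
next
  case (Suc N)
  interpret prob_space "step_space b" by (rule ps)
  let ?a = "b/(b+1)"
  have a0: "0 \<le> ?a" "?a \<le> 1" using assms by auto
  show ?case
  proof (cases "m = 0")
    case True then show ?thesis by (simp add: prob_space)
  next
    case False
    have meas: "{\<omega>\<in>space (step_space b). hit p (Suc N) m \<omega>} \<in> sets (step_space b)" by measurable
    have "ennreal (measure (step_space b) {\<omega>\<in>space (step_space b). hit p (Suc N) m \<omega>})
      = (\<integral>\<^sup>+t. ennreal (measure (step_space b) {\<omega>\<in>space (step_space b). hit p (Suc N) m (t ## \<omega>)}) \<partial>measure_pmf (bernoulli_pmf ?a))"
      using prob_space.prob_stream_space[OF prob_space_measure_pmf, OF meas[unfolded step_space_def]]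
      unfolding step_space_def .
    also have "\<dots> = (\<integral>\<^sup>+t. ennreal (if t then g ?a p N (m-1) else g ?a p N (m+p)) \<partial>measure_pmf (bernoulli_pmf ?a))"
      using False Suc by (intro nn_integral_cong) auto
    also have "\<dots> = ennreal (g ?a p (Suc N) m)"
    proof -
      have n1: "0 \<le> g ?a p N (m-1) * ?a" "0 \<le> g ?a p N (m+p) * (1-?a)"
        using a0 by (intro mult_nonneg_nonneg g_nonneg; simp)+
      have "(\<integral>\<^sup>+t. ennreal (if t then g ?a p N (m-1) else g ?a p N (m+p)) \<partial>measure_pmf (bernoulli_pmf ?a))
         = ennreal (g ?a p N (m-1)) * ?a + ennreal (g ?a p N (m+p)) * (1-?a)"
        using a0 g_nonneg[OF a0] by (subst nn_integral_bernoulli_pmf) auto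
      also have "\<dots> = ennreal (g ?a p N (m-1) * ?a + g ?a p N (m+p) * (1-?a))"
        using g_nonneg[OF a0] by (simp only: ennreal_plus[OF n1] ennreal_mult')
      also have "\<dots> = ennreal (g ?a p (Suc N) m)" using False by (simp add: algebra_simps)
      finally show ?thesis .
    qed
    finally have E: "ennreal (measure (step_space b) {\<omega>\<in>space (step_space b). hit p (Suc N) m \<omega>}) = ennreal (g ?a p (Suc N) m)" .
    show ?thesis using E ennreal_inj[OF measure_nonneg g_nonneg[OF a0]] by blast
  qed
qed


definition Zf :: "nat \<Rightarrow> bool stream \<Rightarrow> nat \<Rightarrow> int" where
  "Zf p \<omega> j = int (length (filter id (stake j \<omega>))) - int p * int (length (filter Not (stake j \<omega>)))"

lemma Zf_0[simp]: "Zf p \<omega> 0 = 0" by (simp add: Zf_def)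

lemma Zf_Suc: "Zf p \<omega> (Suc j) = (if shd \<omega> then 1 else - int p) + Zf p (stl \<omega>) j"
  by (simp add: Zf_def algebra_simps)

lemma hit_iff: "hit p N m \<omega> \<longleftrightarrow> (\<exists>j\<le>N. Zf p \<omega> j = int m)"
proof (induction N arbitrary: m \<omega>)
  case 0
  then show ?case by auto
next
  case (Suc N)
  have "(\<exists>j\<le>Suc N. Zf p \<omega> j = int m) \<longleftrightarrow> (m = 0 \<or> (\<exists>j\<le>N. Zf p \<omega> (Suc j) = int m))"
  proof
    assume "\<exists>j\<le>Suc N. Zf p \<omega> j = int m"
    then obtain j where j: "j \<le> Suc N" "Zf p \<omega> j = int m" by blast
    show "m = 0 \<or> (\<exists>j\<le>N. Zf p \<omega> (Suc j) = int m)"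
    proof (cases j)
      case 0 then show ?thesis using j by simp
    next
      case (Suc i) then show ?thesis using j by auto
    qed
  next
    assume "m = 0 \<or> (\<exists>j\<le>N. Zf p \<omega> (Suc j) = int m)"
    then show "\<exists>j\<le>Suc N. Zf p \<omega> j = int m"
      by (metis Suc_le_mono Zf_0 of_nat_0 zero_le)
  qed
  also have "\<dots> \<longleftrightarrow> hit p (Suc N) m \<omega>"
    by (cases m) (auto simp: Suc Zf_Suc)
  finally show ?case by simp
qed

lemma crosses_iff: "crosses p d \<omega> \<longleftrightarrow> (\<exists>N. hit p N (d+1) \<omega>)"
proof -
  have "crosses p d \<omega> \<longleftrightarrow> (\<exists>k. Zf p \<omega> k = int (d+1))"
  proof
    assume "crosses p d \<omega>"
    then obtain k n where "walk_pos \<omega> k = (n, p * n + d + 1)" unfolding crosses_def by blast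
    then show "\<exists>k. Zf p \<omega> k = int (d+1)" unfolding walk_pos_def Zf_def by (intro exI[of _ k]) simp
  next
    assume "\<exists>k. Zf p \<omega> k = int (d+1)"
    then obtain k where k: "Zf p \<omega> k = int (d+1)" by blast
    let ?F = "length (filter Not (stake k \<omega>))" and ?T = "length (filter id (stake k \<omega>))"
    have "int ?T = int (p * ?F + d + 1)" using k unfolding Zf_def by simp
    then have "?T = p * ?F + d + 1" by linarith
    then show "crosses p d \<omega>" unfolding crosses_def walk_pos_def by auto
  qed
  then show ?thesis by (auto simp: hit_iff)
qed



declare g.simps(2)[simp del]

lemma g_zero[simp]: "g a p N 0 = 1" by (cases N) (auto simp: g.simps)
lemma g_Suc: "m \<noteq> 0 \<Longrightarrow> g a p (Suc N) m = a * g a p N (m-1) + (1-a) * g a p N (m+p)"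
  by (simp add: g.simps)

definition Fm :: "real \<Rightarrow> nat \<Rightarrow> nat \<Rightarrow> real" where
  "Fm b p m = measure (step_space b) {\<omega>\<in>space (step_space b). \<exists>N. hit p N m \<omega>}"

lemma hit_mono: "hit p N m \<omega> \<Longrightarrow> N \<le> N' \<Longrightarrow> hit p N' m \<omega>"
  unfolding hit_iff using order_trans by blast

lemma g_lim:
  assumes "b > 0"
  shows "(\<lambda>N. g (b/(b+1)) p N m) \<longlonglongrightarrow> Fm b p m"
proof -
  interpret prob_space "step_space b" by (rule ps)
  let ?A = "\<lambda>N. {\<omega>\<in>space (step_space b). hit p N m \<omega>}"
  have "(\<lambda>N. measure (step_space b) (?A N)) \<longlonglongrightarrow> measure (step_space b) (\<Union>N. ?A N)"
    by (rule finite_Lim_measure_incseq) (auto simp: incseq_def intro: hit_mono)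
  moreover have "(\<Union>N. ?A N) = {\<omega>\<in>space (step_space b). \<exists>N. hit p N m \<omega>}" by auto
  ultimately show ?thesis using hit_prob[OF assms] by (simp add: Fm_def)
qed

lemma Phi_Fm: "Phi b p d = Fm b p (d+1)"
  unfolding Phi_def Fm_def by (simp add: crosses_iff)

lemma g_le1: "0 \<le> a \<Longrightarrow> a \<le> 1 \<Longrightarrow> g a p N m \<le> 1"
proof (induction N arbitrary: m)
  case 0 then show ?case by (simp add: g_nonneg)
next
  case (Suc N)
  have "a * g a p N (m-1) + (1-a) * g a p N (m+p) \<le> a * 1 + (1-a) * 1"
    using Suc by (intro add_mono mult_left_mono) auto
  then show ?case by (cases "m=0") (simp_all add: g_Suc)
qed

lemma g_Suc_mono: "0 \<le> a \<Longrightarrow> a \<le> 1 \<Longrightarrow> g a p N m \<le> g a p (Suc N) m"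
proof (induction N arbitrary: m)
  case 0 then show ?case by (cases "m=0") (auto simp: g_Suc intro!: add_nonneg_nonneg mult_nonneg_nonneg g_nonneg)
next
  case (Suc N)
  show ?case
  proof (cases "m = 0")
    case False
    have "a * g a p N (m-1) + (1-a) * g a p N (m+p) \<le> a * g a p (Suc N) (m-1) + (1-a) * g a p (Suc N) (m+p)"
      using Suc by (intro add_mono mult_left_mono) auto
    then show ?thesis using False by (simp add: g_Suc)
  qed simp
qed

lemma g_mono: "0 \<le> a \<Longrightarrow> a \<le> 1 \<Longrightarrow> N \<le> N' \<Longrightarrow> g a p N m \<le> g a p N' m"
  by (rule lift_Suc_mono_le[of "\<lambda>N. g a p N m"]) (auto intro: g_Suc_mono)

lemma g_submult: "0 \<le> a \<Longrightarrow> a \<le> 1 \<Longrightarrow> g a p N (m+n) \<le> g a p N m * g a p N n"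
proof (induction N arbitrary: m n)
  case 0 then show ?case by simp
next
  case (Suc N)
  show ?case
  proof (cases "m = 0 \<or> n = 0")
    case True
    then show ?thesis by auto
  next
    case False
    have "g a p (Suc N) (m+n) = a * g a p N ((m-1)+n) + (1-a) * g a p N ((m+p)+n)"
      using False by (simp add: algebra_simps g_Suc)
    also have "\<dots> \<le> a * (g a p N (m-1) * g a p N n) + (1-a) * (g a p N (m+p) * g a p N n)"
      using Suc by (intro add_mono mult_left_mono) auto
    also have "\<dots> = g a p (Suc N) m * g a p N n"
      using False by (simp add: algebra_simps g_Suc)
    also have "\<dots> \<le> g a p (Suc N) m * g a p (Suc N) n"
      using Suc.prems by (intro mult_left_mono g_Suc_mono g_nonneg) auto
    finally show ?thesis .
  qed
qed

lemma g_supermult: "0 \<le> a \<Longrightarrow> a \<le> 1 \<Longrightarrow> g a p N m * g a p M n \<le> g a p (N+M) (m+n)"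
proof (induction N arbitrary: m)
  case 0 then show ?case by (simp add: g_nonneg)
next
  case (Suc N)
  show ?case
  proof (cases "m = 0")
    case True
    then show ?thesis using Suc.prems g_mono[of a M "Suc N + M" p n] by simp
  next
    case False
    have "g a p (Suc N) m * g a p M n = a * (g a p N (m-1) * g a p M n) + (1-a) * (g a p N (m+p) * g a p M n)"
      using False by (simp add: algebra_simps g_Suc)
    also have "\<dots> \<le> a * g a p (N+M) ((m-1)+n) + (1-a) * g a p (N+M) ((m+p)+n)"
      using Suc by (intro add_mono mult_left_mono) auto
    also have "\<dots> = g a p (Suc N + M) (m+n)"
      using False by (simp add: algebra_simps g_Suc)
    finally show ?thesis .
  qed
qed

lemma g_root:
  assumes "0 \<le> a" "a \<le> 1" "y > 0" "a + (1-a) * y^(p+1) = y"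
  shows "g a p N m \<le> y ^ m"
proof (induction N arbitrary: m)
  case 0 then show ?case using assms by simp
next
  case (Suc N)
  show ?case
  proof (cases "m = 0")
    case False
    have "g a p (Suc N) m = a * g a p N (m-1) + (1-a) * g a p N (m+p)" using False by (simp add: g_Suc)
    also have "\<dots> \<le> a * y^(m-1) + (1-a) * y^(m+p)"
      using Suc assms by (intro add_mono mult_left_mono) auto
    also have "\<dots> = y^(m-1) * (a + (1-a) * y^(p+1))"
      using False by (cases m) (auto simp: algebra_simps power_add)
    also have "\<dots> = y^m" using False assms(4) by (cases m) auto
    finally show ?thesis .
  qed simp
qed



context
  fixes b :: real and p :: nat
  assumes b: "b > 0"
begin

abbreviation "aa \<equiv> b/(b+1)"

lemma aa: "0 \<le> aa" "aa \<le> 1" "0 < aa" using b by auto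

lemma F_ge: "g aa p N m \<le> Fm b p m"
  by (rule incseq_le[OF _ g_lim[OF b]]) (auto simp: incseq_def intro: g_mono aa)

lemma F_le1: "Fm b p m \<le> 1"
  by (rule LIMSEQ_le_const2[OF g_lim[OF b]]) (auto intro: g_le1 aa)

lemma F_0: "Fm b p 0 = 1"
  using g_lim[OF b, of p 0] by (simp add: LIMSEQ_const_iff)

lemma F_rec: "m \<noteq> 0 \<Longrightarrow> Fm b p m = aa * Fm b p (m-1) + (1-aa) * Fm b p (m+p)"
proof -
  assume m: "m \<noteq> 0"
  have "(\<lambda>N. g aa p (Suc N) m) \<longlonglongrightarrow> Fm b p m"
    using g_lim[OF b] by (rule LIMSEQ_Suc)
  moreover have "(\<lambda>N. g aa p (Suc N) m) \<longlonglongrightarrow> aa * Fm b p (m-1) + (1-aa) * Fm b p (m+p)"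
    unfolding g_Suc[OF m] by (intro tendsto_intros g_lim[OF b])
  ultimately show ?thesis by (rule LIMSEQ_unique)
qed

lemma F_mult: "Fm b p (m+n) = Fm b p m * Fm b p n"
proof (rule antisym)
  show "Fm b p (m+n) \<le> Fm b p m * Fm b p n"
    by (rule LIMSEQ_le[OF g_lim[OF b] tendsto_mult[OF g_lim[OF b] g_lim[OF b]]])
       (auto intro: g_submult aa)
  show "Fm b p m * Fm b p n \<le> Fm b p (m+n)"
    by (rule LIMSEQ_le_const2[OF tendsto_mult[OF g_lim[OF b] g_lim[OF b]]])
       (auto intro: order_trans[OF g_supermult F_ge] aa)
qed

lemma F_pow: "Fm b p m = Fm b p 1 ^ m"
proof (induction m)
  case 0 then show ?case by (simp add: F_0)
next
  case (Suc m)
  then show ?case using F_mult[of 1 m] by simp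
qed

lemma F_root_min: "y > 0 \<Longrightarrow> aa + (1-aa) * y^(p+1) = y \<Longrightarrow> Fm b p 1 \<le> y"
  by (rule LIMSEQ_le_const2[OF g_lim[OF b]]) (use g_root[OF aa(1,2), of y p _ 1] in simp)

lemma F_pos: "Fm b p 1 > 0"
proof -
  have "g aa p 1 1 = aa" by (simp add: g_Suc)
  then show ?thesis using F_ge[of 1 1] aa by simp
qed

end



lemma sum_bound:
  fixes q b :: real and p :: nat
  assumes "0 < q" "q < 1" "b > 0" "b \<ge> real p"
  shows "(\<Sum>i<Suc p. q^i) < b + 1"
proof -
  have "(\<Sum>i<Suc p. q^i) = 1 + (\<Sum>i<p. q^Suc i)"
    by (subst sum.lessThan_Suc_shift) simp
  also have "(\<Sum>i<p. q^Suc i) \<le> (\<Sum>i<p. q)"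
  proof (rule sum_mono)
    fix i assume "i \<in> {..<p}"
    have "q^i \<le> 1" using assms by (intro power_le_one) auto
    then show "q^Suc i \<le> q" using assms by (simp add: mult_left_le)
  qed
  also have "\<dots> = real p * q" by simp
  also have "real p * q < b"
  proof (cases "p = 0")
    case False
    then have "real p * q < real p" using assms by simp
    then show ?thesis using assms by linarith
  qed (use assms in simp)
  finally show ?thesis by simp
qed

theorem theorem1:
  fixes \<beta> :: real and p d :: nat
  assumes "\<beta> > 0"
  shows "Phi \<beta> p d = Phi \<beta> p 0 ^ (d + 1)
    \<and> (Phi \<beta> p 0 > 0
       \<and> Phi \<beta> p 0 ^ (p + 1) - (\<beta> + 1) * Phi \<beta> p 0 + \<beta> = 0
       \<and> (\<forall>y::real. y > 0 \<longrightarrow> y ^ (p + 1) - (\<beta> + 1) * y + \<beta> = 0 \<longrightarrow> Phi \<beta> p 0 \<le> y))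
    \<and> (\<beta> \<ge> real p \<longrightarrow> (\<forall>d'::nat. Phi \<beta> p d' = 1))"
proof -
  define q where "q = Phi \<beta> p 0"
  have q1: "q = Fm \<beta> p 1" unfolding q_def Phi_Fm by simp
  have Phid: "Phi \<beta> p d' = q ^ (d'+1)" for d'
    unfolding Phi_Fm q1 using F_pow[OF assms] by blast
  have qpos: "q > 0" using F_pos[OF assms] q1 by simp
  have qle: "q \<le> 1" using F_le1[OF assms] q1 by simp
  have b1: "\<beta> + 1 > 0" using assms by simp
  have "q = \<beta>/(\<beta>+1) * 1 + (1 - \<beta>/(\<beta>+1)) * q^(p+1)"
    using F_rec[OF assms, where m=1 and p=p] F_0[OF assms] F_pow[OF assms, of p "p+1"] q1 by simp
  moreover have "1 - \<beta>/(\<beta>+1) = 1/(\<beta>+1)" using b1 by (simp add: field_simps)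
  ultimately have e1: "q = \<beta>/(\<beta>+1) + q^(p+1)/(\<beta>+1)" by simp
  have eq: "q * (\<beta>+1) = \<beta> + q^(p+1)"
    by (subst e1) (use b1 in \<open>simp add: add_divide_distrib[symmetric]\<close>)
  have root: "q ^ (p + 1) - (\<beta> + 1) * q + \<beta> = 0" using eq by (simp add: algebra_simps)
  have minr: "q \<le> y" if "y > 0" "y ^ (p + 1) - (\<beta> + 1) * y + \<beta> = 0" for y
  proof -
    have h: "\<beta> + y^(p+1) = y*(\<beta>+1)" using that(2) by (simp add: algebra_simps)
    have "\<beta>/(\<beta>+1) + (1 - \<beta>/(\<beta>+1)) * y^(p+1) = (\<beta> + y^(p+1))/(\<beta>+1)"
    proof -
      have k: "1 - \<beta>/(\<beta>+1) = 1/(\<beta>+1)" using b1 by (simp add: field_simps)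
      show ?thesis unfolding k by (simp add: add_divide_distrib)
    qed
    also have "\<dots> = y" using h b1 by simp
    finally have "\<beta>/(\<beta>+1) + (1 - \<beta>/(\<beta>+1)) * y^(p+1) = y" .
    then show ?thesis using F_root_min[OF assms that(1)] q1 by simp
  qed
  have one: "q = 1" if "\<beta> \<ge> real p"
  proof (rule ccontr)
    assume "q \<noteq> 1"
    then have q1': "q < 1" using qle by simp
    have "1 - q^(p+1) = (1 - q) * (\<Sum>i<Suc p. q^i)" using one_diff_power_eq[of q "Suc p"] by simp
    also have "\<dots> < (1 - q) * (\<beta> + 1)"
      using sum_bound[OF qpos q1' assms that] q1' by (intro mult_strict_left_mono) auto
    finally show False using root by (simp add: algebra_simps)
  qed
  show ?thesis
    using Phid qpos root minr one unfolding q_def[symmetric] by auto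
qed

end
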